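(* For plane binary tree shapes $t$ let $S_t$, $T$ be as in the context. Then \[ \sum_{\substack{t \in \mathcal{B}_{\le n}\\ |t| < \log_4 n}} \left(1 - \frac{[z^n]S_t(z)}{[z^n]T(z)}\right) = \mathcal{O}\!\left(\frac{n}{(\log_4 n)^{3/2}}\right) \quad \text{as } n\to\infty . \]
   Context: A plane binary tree is a rooted tree in which each node has a left and a right slot, each empty or holding a subtree; $\mathcal{B}_{\le n}$ is the set of (unlabeled) plane binary trees with at most $n$ nodes, and $|t|$ is the number of nodes. A plane increasing binary tree of size $n$ is a plane binary tree whose $n$ nodes are labeled $1,\dots,n$ increasingly along every path from the root; their exponential generating function is $T(z)=z/(1-z)$, so $[z^n]T(z)=1$. A fringe subtree is a node with all its descendants; its shape is obtained by forgetting labels. For a shape $t$ with $k$ nodes, $\ell(t)$ is its number of increasing labelings (equal to $k!$ divided by the product of the sizes of all fringe subtrees of $t$) and $w(t)=\ell(t)/k!$. $S_t(z)$ is the exponential generating function of plane increasing binary trees having no fringe subtree of shape $t$; it is the power series solution of $S_t'(z)=(1+S_t(z))^2-w(t)kz^{k-1}$, $S_t(0)=0$. Thus $1-[z^n]S_t(z)/[z^n]T(z)$ is the probability that a uniformly random plane increasing binary tree of size $n$ has a fringe subtree of shape $t$. *)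

theory Defs
  imports "HOL-Library.Tree" "HOL-Computational_Algebra.Formal_Power_Series"
    "HOL-Library.Landau_Symbols" Complex_Main
begin

text \<open>Plane binary trees (shapes) are modelled as \<open>unit tree\<close>; \<open>Leaf\<close> is an empty slot,
  and \<open>size t\<close> is the number of nodes \<open>|t|\<close>.\<close>

type_synonym shape = "unit tree"

fun fringe_size_prod :: "shape \<Rightarrow> nat" where
  "fringe_size_prod Leaf = 1"
| "fringe_size_prod (Node l u r) = size (Node l u r) * fringe_size_prod l * fringe_size_prod r"

definition num_incr_labelings :: "shape \<Rightarrow> real" where
  "num_incr_labelings t = fact (size t) / real (fringe_size_prod t)"

definition wt :: "shape \<Rightarrow> real" where
  "wt t = num_incr_labelings t / fact (size t)"

definition T_egf :: "real fps" where
  "T_egf = fps_X * inverse (1 - fps_X)"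

definition S_egf :: "shape \<Rightarrow> real fps" where
  "S_egf t = (THE S. fps_nth S 0 = 0 \<and>
      fps_deriv S = (1 + S)^2 - fps_const (wt t * real (size t)) * fps_X ^ (size t - 1))"

end

theory Submission
  imports Defs
begin


unbundle fps_syntax

fun sc :: "real \<Rightarrow> nat \<Rightarrow> nat \<Rightarrow> real" where
  "sc c m 0 = 0"
| "sc c m (Suc n) = ((\<Sum>i=0..n. (if i = 0 then 1 else sc c m i) * (if n - i = 0 then 1 else sc c m (n - i)))
        - (if n = m then c else 0)) / real (Suc n)"

lemma one_plus_nth: "(S::real fps) $ 0 = 0 \<Longrightarrow> (1 + S) $ i = (if i = 0 then 1 else S $ i)"
  by (cases i) auto

lemma rhs_nth:
  fixes S :: "real fps"
  assumes "S $ 0 = 0"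
  shows "((1 + S)^2 - fps_const c * fps_X ^ m) $ n =
    (\<Sum>i=0..n. (if i = 0 then 1 else S $ i) * (if n - i = 0 then 1 else S $ (n - i))) - (if n = m then c else 0)"
proof -
  have "((1 + S)^2) $ n = (\<Sum>i=0..n. (1 + S) $ i * (1 + S) $ (n - i))"
    by (simp add: power2_eq_square fps_mult_nth)
  also have "\<dots> = (\<Sum>i=0..n. (if i = 0 then 1 else S $ i) * (if n - i = 0 then 1 else S $ (n - i)))"
    by (rule sum.cong) (simp_all add: one_plus_nth[OF assms] assms)
  finally show ?thesis by simp
qed

lemma ode_iff:
  fixes S :: "real fps"
  assumes "S $ 0 = 0"
  shows "fps_deriv S = (1 + S)^2 - fps_const c * fps_X ^ m \<longleftrightarrow>
    (\<forall>n. real (Suc n) * S $ Suc n = (\<Sum>i=0..n. (if i = 0 then 1 else S $ i) * (if n - i = 0 then 1 else S $ (n - i)))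
        - (if n = m then c else 0))" (is "?A \<longleftrightarrow> ?B")
proof -
  have "fps_deriv S = (1 + S)^2 - fps_const c * fps_X ^ m \<longleftrightarrow>
     (\<forall>n. fps_deriv S $ n = ((1 + S)^2 - fps_const c * fps_X ^ m) $ n)"
    by (simp add: fps_eq_iff)
  also have "\<dots> \<longleftrightarrow> ?B"
    by (simp only: rhs_nth[OF assms] fps_deriv_nth) (simp add: algebra_simps)
  finally show ?thesis .
qed

lemma sc_solves:
  "fps_deriv (Abs_fps (sc c m)) = (1 + Abs_fps (sc c m))^2 - fps_const c * fps_X ^ m"
proof (subst ode_iff)
  show "Abs_fps (sc c m) $ 0 = 0" by simp
  show "\<forall>n. real (Suc n) * Abs_fps (sc c m) $ Suc n =
        (\<Sum>i = 0..n. (if i = 0 then 1 else Abs_fps (sc c m) $ i) *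
           (if n - i = 0 then 1 else Abs_fps (sc c m) $ (n - i))) - (if n = m then c else 0)"
  proof
    fix n
    have "real (Suc n) * sc c m (Suc n) = (\<Sum>i=0..n. (if i = 0 then 1 else sc c m i) * (if n - i = 0 then 1 else sc c m (n - i)))
        - (if n = m then c else 0)"
      by (simp only: sc.simps(2)) (simp del: of_nat_Suc)
    then show "real (Suc n) * Abs_fps (sc c m) $ Suc n =
        (\<Sum>i = 0..n. (if i = 0 then 1 else Abs_fps (sc c m) $ i) *
           (if n - i = 0 then 1 else Abs_fps (sc c m) $ (n - i))) - (if n = m then c else 0)"
      by (simp only: fps_nth_Abs_fps)
  qed
qed

lemma ode_unique:
  fixes S S' :: "real fps"
  assumes "S $ 0 = 0" "S' $ 0 = 0"
    and "fps_deriv S = (1 + S)^2 - fps_const c * fps_X ^ m"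
    and "fps_deriv S' = (1 + S')^2 - fps_const c * fps_X ^ m"
  shows "S = S'"
proof -
  have S: "\<And>n. real (Suc n) * S $ Suc n = (\<Sum>i=0..n. (if i = 0 then 1 else S $ i) * (if n - i = 0 then 1 else S $ (n - i)))
        - (if n = m then c else 0)" using assms(3) ode_iff[OF assms(1)] by blast
  have S': "\<And>n. real (Suc n) * S' $ Suc n = (\<Sum>i=0..n. (if i = 0 then 1 else S' $ i) * (if n - i = 0 then 1 else S' $ (n - i)))
        - (if n = m then c else 0)" using assms(4) ode_iff[OF assms(2)] by blast
  have "S $ n = S' $ n" for n
  proof (induction n rule: less_induct)
    case (less n)
    show ?case
    proof (cases n)
      case 0 then show ?thesis using assms by simp
    next
      case (Suc j)
      have "(\<Sum>i=0..j. (if i = 0 then 1 else S $ i) * (if j - i = 0 then 1 else S $ (j - i))) =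
            (\<Sum>i=0..j. (if i = 0 then 1 else S' $ i) * (if j - i = 0 then 1 else S' $ (j - i)))"
        by (rule sum.cong) (auto simp: less Suc)
      then have "real (Suc j) * S $ Suc j = real (Suc j) * S' $ Suc j" using S[of j] S'[of j] by simp
      then show ?thesis using Suc by simp
    qed
  qed
  then show ?thesis by (simp add: fps_eq_iff)
qed

lemma S_egf_eq: "S_egf t = Abs_fps (sc (wt t * real (size t)) (size t - 1))"
  unfolding S_egf_def
  by (rule the_equality) (auto simp: sc_solves intro: ode_unique)

lemma sc_small: "n \<le> m \<Longrightarrow> sc c m n = (if n = 0 then 0 else 1)"
proof (induction n rule: less_induct)
  case (less n)
  show ?case
  proof (cases n)
    case 0 then show ?thesis by simp
  next
    case (Suc j)
    have "(\<Sum>i=0..j. (if i = 0 then 1 else sc c m i) * (if j - i = 0 then 1 else sc c m (j - i))) =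
          (\<Sum>i=0..j. (1::real))"
      by (rule sum.cong) (use less.prems Suc in \<open>auto simp: less\<close>)
    then show ?thesis using Suc less.prems by simp
  qed
qed

lemma sc_bounds:
  assumes "0 \<le> c" "c \<le> real (Suc m)"
  shows "0 \<le> sc c m n \<and> sc c m n \<le> 1"
proof (induction n rule: less_induct)
  case (less n)
  show ?case
  proof (cases n)
    case 0 then show ?thesis by simp
  next
    case (Suc j)
    define a where "a i = (if i = 0 then 1 else sc c m i)" for i
    have a01: "i \<le> j \<Longrightarrow> 0 \<le> a i \<and> a i \<le> 1" for i using less[of i] Suc by (auto simp: a_def)
    have eq: "(\<Sum>i=0..j. (if i = 0 then 1 else sc c m i) * (if j - i = 0 then 1 else sc c m (j - i))) =
          (\<Sum>i=0..j. a i * a (j - i))" by (simp add: a_def)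
    have val: "sc c m n = ((\<Sum>i=0..j. a i * a (j - i)) - (if j = m then c else 0)) / real (Suc j)"
      using Suc eq by (simp only: sc.simps(2))
    have lo: "0 \<le> (\<Sum>i=0..j. a i * a (j - i))" by (rule sum_nonneg) (simp add: a01)
    have "(\<Sum>i=0..j. a i * a (j - i)) \<le> (\<Sum>i=0..j. 1)"
      by (rule sum_mono) (simp add: a01 mult_le_one)
    then have hi: "(\<Sum>i=0..j. a i * a (j - i)) \<le> real (Suc j)" by simp
    show ?thesis
    proof (cases "j = m")
      case True
      have "(\<Sum>i=0..j. a i * a (j - i)) = (\<Sum>i=0..j. 1)"
        by (rule sum.cong) (auto simp: a_def sc_small True)
      then have "(\<Sum>i=0..j. a i * a (j - i)) = real (Suc m)" using True by simp
      then have v: "sc c m n = (real (Suc m) - c) / real (Suc m)" using val True by simp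
      have "0 \<le> (real (Suc m) - c) / real (Suc m)" using assms by simp
      moreover have "(real (Suc m) - c) / real (Suc m) \<le> 1" using assms by (simp add: divide_le_eq)
      ultimately show ?thesis using v by simp
    next
      case False
      then have v: "sc c m n = (\<Sum>i=0..j. a i * a (j - i)) / real (Suc j)" using val by simp
      have "(\<Sum>i=0..j. a i * a (j - i)) / real (Suc j) \<le> 1" using hi by (simp add: divide_le_eq)
      then show ?thesis using v lo by simp
    qed
  qed
qed

lemma fsp_pos: "fringe_size_prod t \<ge> 1"
  by (induction t) auto

lemma wt_size: "wt t * real (size t) = real (size t) / real (fringe_size_prod t)"
  by (simp add: wt_def num_incr_labelings_def)

lemma S_nth_bounds: "0 \<le> S_egf t $ n \<and> S_egf t $ n \<le> 1"
proof -
  have p: "real (fringe_size_prod t) \<ge> 1" using fsp_pos[of t] by simp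
  have c0: "0 \<le> wt t * real (size t)" using p by (simp add: wt_size)
  have c1: "wt t * real (size t) \<le> real (Suc (size t - 1))"
  proof -
    have "real (size t) / real (fringe_size_prod t) \<le> real (size t)"
      using p by (simp add: divide_le_eq mult_le_cancel_left1 order_trans)
    then show ?thesis by (simp add: wt_size)
  qed
  show ?thesis unfolding S_egf_eq using sc_bounds[OF c0 c1] by simp
qed

lemma T_nth: "n \<ge> 1 \<Longrightarrow> T_egf $ n = 1"
  by (cases n) (auto simp: T_egf_def fps_inverse_one_minus_fps_X)



lemma size_split: "{t::unit tree. size t = Suc k} =
  (\<Union>i\<in>{0..k}. (\<lambda>(l,r). Node l () r) ` ({l. size l = i} \<times> {r. size r = k - i}))"
proof
  show "{t::unit tree. size t = Suc k} \<subseteq> (\<Union>i\<in>{0..k}. (\<lambda>(l,r). Node l () r) ` ({l. size l = i} \<times> {r. size r = k - i}))"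
  proof
    fix t :: "unit tree" assume "t \<in> {t. size t = Suc k}"
    then obtain l r where t: "t = Node l () r" and s: "size l + size r = k"
      by (cases t) auto
    then show "t \<in> (\<Union>i\<in>{0..k}. (\<lambda>(l,r). Node l () r) ` ({l. size l = i} \<times> {r. size r = k - i}))"
      by (auto intro!: bexI[of _ "size l"] image_eqI[of _ _ "(l,r)"])
  qed
qed auto

lemma fin_size: "finite {t::unit tree. size t = k}"
proof (induction k rule: less_induct)
  case (less k)
  show ?case
  proof (cases k)
    case 0
    then have "{t::unit tree. size t = k} = {Leaf}" by auto
    then show ?thesis by simp
  next
    case (Suc j)
    show ?thesis unfolding Suc size_split
      by (intro finite_UN_I finite_imageI finite_cartesian_product) (auto simp: less Suc)
  qed
qed

definition N :: "nat \<Rightarrow> nat" where "N k = card {t::unit tree. size t = k}"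

lemma N_0: "N 0 = 1"
proof -
  have "{t::unit tree. size t = 0} = {Leaf}" by auto
  then show ?thesis by (simp add: N_def)
qed

lemma N_Suc: "N (Suc k) = (\<Sum>i=0..k. N i * N (k - i))"
proof -
  have "N (Suc k) = (\<Sum>i=0..k. card ((\<lambda>(l,r). Node l () r) ` ({l::unit tree. size l = i} \<times> {r. size r = k - i})))"
    unfolding N_def size_split
    by (rule card_UN_disjoint) (auto intro: fin_size)
  also have "\<dots> = (\<Sum>i=0..k. N i * N (k - i))"
  proof (rule sum.cong)
    fix i
    have "inj_on (\<lambda>(l,r). Node l () r) ({l::unit tree. size l = i} \<times> {r. size r = k - i})"
      by (auto simp: inj_on_def)
    then show "card ((\<lambda>(l,r). Node l () r) ` ({l::unit tree. size l = i} \<times> {r. size r = k - i})) = N i * N (k - i)"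
      by (simp add: card_image card_cartesian_product N_def)
  qed simp
  finally show ?thesis .
qed

definition h :: "nat \<Rightarrow> real" where "h j = ((1/2) gchoose j) * (-4)^j"
definition cat :: "nat \<Rightarrow> real" where "cat k = - h (Suc k) / 2"

lemma h_0: "h 0 = 1" by (simp add: h_def)

lemma h_Suc: "h (Suc j) = h j * (4 * real j - 2) / (real j + 1)"
proof -
  have "(1/2::real) * ((1/2) gchoose j) = of_nat j * ((1/2) gchoose j) + of_nat (Suc j) * ((1/2) gchoose (Suc j))"
    by (rule gbinomial_mult_1)
  then have g: "((1/2::real) gchoose (Suc j)) = (1/2 - real j) * ((1/2) gchoose j) / (real j + 1)"
    by (simp add: field_simps)
  show ?thesis unfolding h_def g by (simp add: field_simps)
qed

lemma cat_0: "cat 0 = 1" by (simp add: cat_def h_Suc h_0)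

lemma h_cat: "h (Suc k) = - 2 * cat k" by (simp add: cat_def)

lemma cat_Suc: "cat (Suc k) = cat k * (4 * real k + 2) / (real k + 2)"
  unfolding cat_def by (subst h_Suc) (simp add: field_simps)

lemma h_conv: "n \<ge> 2 \<Longrightarrow> (\<Sum>j=0..n. h j * h (n - j)) = 0"
proof -
  assume n: "n \<ge> 2"
  have "(\<Sum>j=0..n. h j * h (n - j)) = (\<Sum>j=0..n. ((1/2::real) gchoose j) * ((1/2) gchoose (n - j)) * (-4)^n)"
  proof (rule sum.cong)
    fix j assume "j \<in> {0..n}"
    then have "(-4::real)^j * (-4)^(n-j) = (-4)^n" by (simp add: power_add[symmetric])
    then show "h j * h (n - j) = ((1/2::real) gchoose j) * ((1/2) gchoose (n - j)) * (-4)^n"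
      unfolding h_def by (metis (no_types, lifting) mult.assoc mult.left_commute)
  qed simp
  also have "\<dots> = ((1/2 + 1/2::real) gchoose n) * (-4)^n"
    by (simp add: sum_distrib_right[symmetric] gbinomial_Vandermonde)
  also have "(1/2 + 1/2::real) gchoose n = of_nat (1 choose n)"
    by (simp add: binomial_gbinomial)
  also have "(1 choose n) = 0" using n by simp
  finally show ?thesis by simp
qed

lemma cat_conv: "cat (Suc k) = (\<Sum>i=0..k. cat i * cat (k - i))"
proof -
  define F where "F j = h j * h (Suc (Suc k) - j)" for j
  have "0 = (\<Sum>j=0..Suc (Suc k). F j)" unfolding F_def by (rule h_conv[symmetric]) simp
  also have "\<dots> = F 0 + (\<Sum>i=0..Suc k. F (Suc i))" by (subst sum.atLeast0_atMost_Suc_shift) (simp add: comp_def)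
  also have "\<dots> = F 0 + (\<Sum>i=0..k. F (Suc i)) + F (Suc (Suc k))" by simp
  also have "(\<Sum>i=0..k. F (Suc i)) = (\<Sum>i=0..k. 4 * (cat i * cat (k - i)))"
  proof (rule sum.cong)
    fix i assume "i \<in> {0..k}"
    then have "Suc (Suc k) - Suc i = Suc (k - i)" by auto
    then show "F (Suc i) = 4 * (cat i * cat (k - i))" unfolding F_def by (simp add: h_cat)
  qed simp
  also have "F 0 = -2 * cat (Suc k)" by (simp add: F_def h_0 h_cat)
  also have "F (Suc (Suc k)) = -2 * cat (Suc k)" by (simp add: F_def h_0 h_cat)
  finally show ?thesis by (simp add: sum_distrib_left[symmetric])
qed

lemma N_cat: "real (N k) = cat k"
proof (induction k rule: less_induct)
  case (less k)
  show ?case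
  proof (cases k)
    case 0 then show ?thesis by (simp add: N_0 cat_0)
  next
    case (Suc j)
    have "real (N k) = (\<Sum>i=0..j. real (N i) * real (N (j - i)))" by (simp add: Suc N_Suc)
    also have "\<dots> = (\<Sum>i=0..j. cat i * cat (j - i))" by (rule sum.cong) (auto simp: less Suc)
    finally show ?thesis by (simp add: Suc cat_conv)
  qed
qed

lemma cat_bound: "0 \<le> cat k \<and> (cat k)^2 * (real k + 1)^3 \<le> 16^k"
proof (induction k)
  case 0 then show ?case by (simp add: cat_0)
next
  case (Suc k)
  have key: "(4 * real k + 2)^2 * (real k + 2) \<le> 16 * (real k + 1)^3"
    by (simp add: power2_eq_square power3_eq_cube algebra_simps)
  have e: "cat (Suc k) * (real k + 2) = cat k * (4 * real k + 2)"
    by (simp add: cat_Suc)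
  have "(cat (Suc k))^2 * (real (Suc k) + 1)^3 = (cat (Suc k) * (real k + 2))^2 * (real k + 2)"
    by (simp add: power2_eq_square power3_eq_cube algebra_simps)
  also have "\<dots> = (cat k)^2 * (4 * real k + 2)^2 * (real k + 2)"
    unfolding e by (simp add: power_mult_distrib)
  also have "\<dots> \<le> (16^k / (real k + 1)^3) * (4 * real k + 2)^2 * (real k + 2)"
    using Suc.IH by (intro mult_right_mono) (simp_all add: field_simps)
  also have "\<dots> = 16^k * ((4 * real k + 2)^2 * (real k + 2)) / (real k + 1)^3" by simp
  also have "\<dots> \<le> 16^k * (16 * (real k + 1)^3) / (real k + 1)^3"
    by (intro divide_right_mono mult_left_mono key) simp_all
  also have "\<dots> = 16^(Suc k)" by simp
  finally show ?case using Suc.IH by (simp add: cat_Suc)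
qed



definition a :: "nat \<Rightarrow> real" where "a k = 4^k / ((real k + 1) * sqrt (real k + 1))"

lemma N_le_a: "real (N k) \<le> a k"
proof -
  have c: "0 \<le> cat k" "(cat k)^2 * (real k + 1)^3 \<le> 16^k" using cat_bound[of k] by auto
  have "(cat k * ((real k + 1) * sqrt (real k + 1)))^2 = (cat k)^2 * (real k + 1)^3"
    by (simp add: power_mult_distrib power2_eq_square power3_eq_cube)
  also have "\<dots> \<le> (4^k)^2" using c by (simp add: power2_eq_square power_mult_distrib[symmetric])
  finally have "cat k * ((real k + 1) * sqrt (real k + 1)) \<le> 4^k"
    by (rule power2_le_imp_le) simp
  moreover have "0 < (real k + 1) * sqrt (real k + 1)" by simp
  ultimately have "cat k \<le> 4^k / ((real k + 1) * sqrt (real k + 1))"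
    by (simp add: le_divide_eq)
  then show ?thesis using N_cat[of k] by (simp add: a_def)
qed

lemma a_ratio: "a j \<le> 3/4 * a (Suc j)"
proof -
  define r where "r = real j + 1"
  have r1: "r \<ge> 1" by (simp add: r_def)
  have s1: "sqrt (r + 1) \<le> 3/2 * sqrt r"
  proof -
    have "sqrt (r + 1) \<le> sqrt (9/4 * r)" using r1 by simp
    also have "\<dots> = 3/2 * sqrt r" by (simp add: real_sqrt_mult real_sqrt_divide)
    finally show ?thesis .
  qed
  have key: "(r + 1) * sqrt (r + 1) \<le> 3 * (r * sqrt r)"
  proof -
    have "(r + 1) * sqrt (r + 1) \<le> (2 * r) * (3/2 * sqrt r)"
      using r1 s1 by (intro mult_mono) auto
    then show ?thesis by simp
  qed
  have pos: "0 < r * sqrt r" "0 < (r + 1) * sqrt (r + 1)" using r1 by auto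
  have "a j = 4^j / (r * sqrt r)" by (simp add: a_def r_def)
  moreover have "a (Suc j) = 4 * 4^j / ((r + 1) * sqrt (r + 1))" by (simp add: a_def r_def add.commute)
  moreover have "4^j / (r * sqrt r) \<le> 3 * 4^j / ((r + 1) * sqrt (r + 1))"
  proof -
    have "4^j / (r * sqrt r) = 3 * 4^j / (3 * (r * sqrt r))" by simp
    also have "\<dots> \<le> 3 * 4^j / ((r + 1) * sqrt (r + 1))"
      using key pos by (intro divide_left_mono) auto
    finally show ?thesis .
  qed
  ultimately show ?thesis by simp
qed

lemma a_sum: "(\<Sum>k<Suc j. a k) \<le> 4 * a j"
proof (induction j)
  case 0 then show ?case by (simp add: a_def)
next
  case (Suc j)
  have "(\<Sum>k<Suc (Suc j). a k) = (\<Sum>k<Suc j. a k) + a (Suc j)" by simp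
  also have "\<dots> \<le> 4 * a j + a (Suc j)" using Suc.IH by simp
  also have "\<dots> \<le> 4 * a (Suc j)" using a_ratio[of j] by simp
  finally show ?case .
qed


lemma card_lt: "real (card {t::unit tree. size t < M}) \<le> (\<Sum>k<M. a k)"
proof -
  have "{t::unit tree. size t < M} = (\<Union>k\<in>{..<M}. {t. size t = k})" by auto
  then have "card {t::unit tree. size t < M} = (\<Sum>k<M. N k)"
    unfolding N_def by (simp only:) (subst card_UN_disjoint, auto simp: fin_size)
  then have "real (card {t::unit tree. size t < M}) = (\<Sum>k<M. real (N k))" by simp
  also have "\<dots> \<le> (\<Sum>k<M. a k)" by (rule sum_mono) (rule N_le_a)
  finally show ?thesis .
qed

lemma fin_lt: "finite {t::unit tree. size t < M}"
proof -
  have "{t::unit tree. size t < M} = (\<Union>k\<in>{..<M}. {t. size t = k})" by auto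
  then show ?thesis by (simp add: fin_size)
qed

lemma three_halves_eq: "(3/2::real) = 1 + 1/2" by simp

theorem proposition3p7:
  shows "(\<lambda>n::nat. \<Sum>t\<in>{t::shape. 1 \<le> size t \<and> size t \<le> n \<and> real (size t) < log 4 (real n)}.
            1 - fps_nth (S_egf t) n / fps_nth T_egf n)
         \<in> O(\<lambda>n::nat. real n / (log 4 (real n)) powr (3/2))"
proof (rule bigoI[where c = 4])
  show "\<forall>\<^sub>F n in at_top. norm (\<Sum>t\<in>{t::shape. 1 \<le> size t \<and> size t \<le> n \<and> real (size t) < log 4 (real n)}.
            1 - fps_nth (S_egf t) n / fps_nth T_egf n) \<le> 4 * norm (real n / (log 4 (real n)) powr (3/2))"
    unfolding eventually_at_top_linorder
  proof (intro exI allI impI)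
    fix n :: nat assume n4: "4 \<le> n"
    define L where "L = log 4 (real n)"
    have L1: "1 \<le> L" using n4 by (simp add: L_def)
    define M where "M = nat \<lceil>L\<rceil>"
    have M1: "1 \<le> M" using L1 unfolding M_def by linarith
    have MbA: "real M \<ge> L" using L1 unfolding M_def by linarith
    have MbB: "real M - 1 < L" using L1 unfolding M_def by linarith
    note Mb = MbA MbB
    define A where "A = {t::shape. 1 \<le> size t \<and> size t \<le> n \<and> real (size t) < L}"
    have AB: "A \<subseteq> {t::unit tree. size t < M}"
    proof
      fix t assume "t \<in> A"
      then have "real (size t) < L" by (simp add: A_def)
      then have "size t < \<lceil>L\<rceil>" by linarith
      then show "t \<in> {t::unit tree. size t < M}" by (simp add: M_def)
    qed
    have finA: "finite A" using AB fin_lt finite_subset by blast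
    have term01: "0 \<le> 1 - S_egf t $ n / T_egf $ n \<and> 1 - S_egf t $ n / T_egf $ n \<le> 1" for t
      using S_nth_bounds[of t n] T_nth[of n] n4 by simp
    have "norm (\<Sum>t\<in>A. 1 - S_egf t $ n / T_egf $ n) \<le> (\<Sum>t\<in>A. norm (1 - S_egf t $ n / T_egf $ n))"
      by (rule norm_sum)
    also have "\<dots> \<le> (\<Sum>t\<in>A. 1)" by (rule sum_mono) (use term01 in auto)
    also have "\<dots> = real (card A)" by simp
    also have "\<dots> \<le> real (card {t::unit tree. size t < M})"
      using card_mono[OF fin_lt AB] by simp
    also have "\<dots> \<le> (\<Sum>k<M. a k)" by (rule card_lt)
    also have "\<dots> \<le> 4 * a (M - 1)" using a_sum[of "M - 1"] M1 by simp
    also have "a (M - 1) \<le> real n / (L * sqrt L)"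
    proof -
      have "a (M - 1) = 4 ^ (M - 1) / (real M * sqrt (real M))" using M1 by (simp add: a_def of_nat_diff)
      also have "\<dots> \<le> real n / (real M * sqrt (real M))"
      proof (rule divide_right_mono)
        have "(4::real) ^ (M - 1) = 4 powr real (M - 1)" by (simp add: powr_realpow)
        also have "\<dots> \<le> 4 powr L" using Mb M1 by (intro powr_mono) (auto simp: of_nat_diff)
        also have "\<dots> = real n" using n4 by (simp add: L_def)
        finally show "(4::real) ^ (M - 1) \<le> real n" .
      qed simp
      also have "\<dots> \<le> real n / (L * sqrt L)"
        using L1 Mb by (intro divide_left_mono mult_mono) auto
      finally show ?thesis .
    qed
    finally have main: "norm (\<Sum>t\<in>A. 1 - S_egf t $ n / T_egf $ n) \<le> 4 * (real n / (L * sqrt L))" by simp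
    have "L powr (3/2) = L * sqrt L"
    proof -
      have "L powr (3/2) = L powr (1 + 1/2)" by (simp only: three_halves_eq)
      also have "\<dots> = L powr 1 * L powr (1/2)" by (rule powr_add)
      also have "\<dots> = L * sqrt L" using L1 by (simp add: powr_half_sqrt)
      finally show ?thesis .
    qed
    then have gn: "norm (real n / L powr (3/2)) = real n / (L * sqrt L)"
      using L1 by simp
    show "norm (\<Sum>t\<in>{t::shape. 1 \<le> size t \<and> size t \<le> n \<and> real (size t) < log 4 (real n)}.
            1 - fps_nth (S_egf t) n / fps_nth T_egf n) \<le> 4 * norm (real n / (log 4 (real n)) powr (3/2))"
      unfolding L_def[symmetric] A_def[symmetric] gn by (rule main)
  qed
qed

end
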